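(* Let $1\le p'\le2$, let $R'\subseteq R$, $C'\subseteq C$ be finite, $I\subseteq R\times C$, $I'=I\cap(R'\times C')$, and let $x=\sum_{q\in I'}x_qe_q$ with scalar coefficients $x_q\in\mathbb C$. Then $$|\!|\!|x|\!|\!|_{p'}^{p'}\ \ge\ \sum_{(r,c)\in I'}\Bigl(\max\bigl(d(c),d(r)\bigr)^{1/2-1/p'}|x_{rc}|\Bigr)^{p'} .$$
   Context: $e_{rc}$ denotes the elementary matrix on $\ell_2$ (rows indexed by $R$, columns by $C$), $S^{p'}$ the Schatten class. For $1\le p'\le 2$ and a scalar matrix $x$, $$|\!|\!|x|\!|\!|_{p'}=\inf_{\alpha,\beta\in S^{p'},\ \alpha+\beta=x}\Bigl(\sum_c\Bigl(\sum_r|\alpha_{rc}|^2\Bigr)^{p'/2}\Bigr)^{1/p'}+\Bigl(\sum_r\Bigl(\sum_c|\beta_{rc}|^2\Bigr)^{p'/2}\Bigr)^{1/p'},$$ where $\alpha_{rc}$ denotes the $(r,c)$ matrix coefficient. For $c\in C'$, $d(c)=\#[I'\cap(R'\times\{c\})]$ and for $r\in R'$, $d(r)=\#[I'\cap(\{r\}\times C')]$ (degrees in the bipartite graph $I'$). *)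

theory Defs
  imports "HOL-Analysis.Analysis"
begin

text \<open>Scalar matrices on ell_2 are functions from row indices (type 'r, R = UNIV)
 and column indices (type 'c, C = UNIV) to complex numbers.\<close>

definition col_fin :: "real \<Rightarrow> ('r \<Rightarrow> 'c \<Rightarrow> complex) \<Rightarrow> bool" where
  "col_fin p a \<longleftrightarrow> (\<forall>c. (\<lambda>r. (cmod (a r c))\<^sup>2) summable_on UNIV) \<and>
     (\<lambda>c. (\<Sum>\<^sub>\<infinity>r. (cmod (a r c))\<^sup>2) powr (p/2)) summable_on UNIV"

definition row_fin :: "real \<Rightarrow> ('r \<Rightarrow> 'c \<Rightarrow> complex) \<Rightarrow> bool" where
  "row_fin p b \<longleftrightarrow> (\<forall>r. (\<lambda>c. (cmod (b r c))\<^sup>2) summable_on UNIV) \<and>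
     (\<lambda>r. (\<Sum>\<^sub>\<infinity>c. (cmod (b r c))\<^sup>2) powr (p/2)) summable_on UNIV"

definition col_norm :: "real \<Rightarrow> ('r \<Rightarrow> 'c \<Rightarrow> complex) \<Rightarrow> real" where
  "col_norm p a = (\<Sum>\<^sub>\<infinity>c. (\<Sum>\<^sub>\<infinity>r. (cmod (a r c))\<^sup>2) powr (p/2)) powr (1/p)"

definition row_norm :: "real \<Rightarrow> ('r \<Rightarrow> 'c \<Rightarrow> complex) \<Rightarrow> real" where
  "row_norm p b = (\<Sum>\<^sub>\<infinity>r. (\<Sum>\<^sub>\<infinity>c. (cmod (b r c))\<^sup>2) powr (p/2)) powr (1/p)"

text \<open>The norm |||x|||_p: infimum over decompositions x = a + b with finite
 mixed norms (for 1 <= p <= 2 these are exactly the decompositions in S^p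
 that contribute a finite value).\<close>
definition triple_norm :: "real \<Rightarrow> ('r \<Rightarrow> 'c \<Rightarrow> complex) \<Rightarrow> real" where
  "triple_norm p x = Inf {col_norm p a + row_norm p b | a b.
      (\<forall>r c. a r c + b r c = x r c) \<and> col_fin p a \<and> row_fin p b}"

end

theory Submission
  imports Defs
begin

lemma ge1: fixes t e :: real assumes "0 < t" "t \<le> 1" "e \<le> 0" shows "1 \<le> t powr e"
  using powr_mono2'[of e t 1] assms by simp

lemma L1:
  fixes p t u v :: real
  assumes p: "1 \<le> p" and t: "0 < t" "t < 1" and u: "0 \<le> u" and v: "0 \<le> v"
  shows "(u+v) powr p \<le> t powr (1-p) * u powr p + (1-t) powr (1-p) * v powr p"
proof (cases "u = 0 \<or> v = 0")
  case True
  have g1: "1 \<le> t powr (1-p)" "1 \<le> (1-t) powr (1-p)" using t p by (auto intro!: ge1)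
  have "0 \<le> u powr p" "0 \<le> v powr p" by auto
  then show ?thesis using True g1
    using mult_right_mono[OF g1(1), of "u powr p"] mult_right_mono[OF g1(2), of "v powr p"] by auto
next
  case False
  then have up: "u > 0" and vp: "v > 0" using u v by auto
  have "(u/t + v/(1-t)) \<ge> 0" using up vp t by auto
  have "((1 - (1-t)) *\<^sub>R (u/t) + (1-t) *\<^sub>R (v/(1-t))) powr p
     \<le> (1 - (1-t)) * (u/t) powr p + (1-t) * (v/(1-t)) powr p"
    by (rule convex_onD[OF powr_convex[OF p]]) (use t up vp in auto)
  moreover have "(1 - (1-t)) *\<^sub>R (u/t) + (1-t) *\<^sub>R (v/(1-t)) = u+v" using t by auto
  moreover have "t * (u/t) powr p = t powr (1-p) * u powr p"
    using t up by (simp add: powr_divide powr_diff field_simps)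
  moreover have "(1-t) * (v/(1-t)) powr p = (1-t) powr (1-p) * v powr p"
    using t vp by (simp add: powr_divide powr_diff field_simps)
  ultimately show ?thesis by simp
qed

lemma L2:
  fixes u v :: "'a \<Rightarrow> real" and p A B :: real
  assumes S: "finite S" and p: "1 \<le> p" and u: "\<And>i. i \<in> S \<Longrightarrow> 0 \<le> u i" and v: "\<And>i. i \<in> S \<Longrightarrow> 0 \<le> v i"
    and A: "0 \<le> A" and B: "0 \<le> B"
    and su: "(\<Sum>i\<in>S. u i powr p) \<le> A powr p" and sv: "(\<Sum>i\<in>S. v i powr p) \<le> B powr p"
  shows "(\<Sum>i\<in>S. (u i + v i) powr p) \<le> (A + B) powr p"
proof -
  consider "A = 0" | "B = 0" | "A > 0" "B > 0" using A B by linarith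
  then show ?thesis
  proof cases
    case 1
    then have "(\<Sum>i\<in>S. u i powr p) = 0" using su p by (simp add: sum_nonneg antisym)
    then have "\<forall>i\<in>S. u i powr p = 0" using S by (subst (asm) sum_nonneg_eq_0_iff) auto
    then have "\<forall>i\<in>S. u i = 0" by simp
    then show ?thesis using sv 1 by simp
  next
    case 2
    then have "(\<Sum>i\<in>S. v i powr p) = 0" using sv p by (simp add: sum_nonneg antisym)
    then have "\<forall>i\<in>S. v i powr p = 0" using S by (subst (asm) sum_nonneg_eq_0_iff) auto
    then have "\<forall>i\<in>S. v i = 0" by simp
    then show ?thesis using su 2 by simp
  next
    case 3
    define t where "t = A / (A+B)"
    have pw: "(X / (A+B)) powr (1-p) * X powr p = X * (A+B) powr (p - 1)" if "X > 0" for X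
    proof -
      have "(X / (A+B)) powr (1-p) * X powr p = (X powr (1-p) * X powr p) / (A+B) powr (1-p)"
        using that 3 by (simp add: powr_divide)
      also have "X powr (1-p) * X powr p = X" using that by (simp flip: powr_add)
      also have "X / (A+B) powr (1-p) = X * (A+B) powr (p - 1)"
      proof -
        have "(A+B) powr (p - 1) * (A+B) powr (1-p) = 1" using 3 by (simp flip: powr_add)
        then show ?thesis using 3 by (simp add: field_simps)
      qed
      finally show ?thesis .
    qed
    have t: "0 < t" "t < 1" using 3 by (auto simp: t_def field_simps)
    have 1: "1 - t = B / (A+B)" using 3 by (auto simp: t_def field_simps)
    have "(\<Sum>i\<in>S. (u i + v i) powr p) \<le> (\<Sum>i\<in>S. t powr (1-p) * u i powr p + (1-t) powr (1-p) * v i powr p)"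
      by (rule sum_mono, rule L1) (use p t u v in auto)
    also have "\<dots> = t powr (1-p) * (\<Sum>i\<in>S. u i powr p) + (1-t) powr (1-p) * (\<Sum>i\<in>S. v i powr p)"
      by (simp add: sum.distrib sum_distrib_left)
    also have "\<dots> \<le> t powr (1-p) * A powr p + (1-t) powr (1-p) * B powr p"
      using su sv by (intro add_mono mult_left_mono) auto
    also have "t powr (1-p) * A powr p = A * (A+B) powr (p - 1)"
      using pw[of A] 3 by (simp add: t_def)
    also have "(1-t) powr (1-p) * B powr p = B * (A+B) powr (p - 1)"
      using pw[of B] 3 by (simp add: 1)
    also have "A * (A+B) powr (p - 1) + B * (A+B) powr (p - 1) = (A+B) powr p"
      using powr_add[of "A+B" 1 "p-1"] 3 by (simp add: distrib_right[symmetric])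
    finally show ?thesis .
  qed
qed

lemma L3:
  fixes y :: "'a \<Rightarrow> real" and s :: real
  assumes S: "finite S" and s: "0 < s" "s \<le> 1" and y: "\<And>i. i \<in> S \<Longrightarrow> 0 \<le> y i"
  shows "(\<Sum>i\<in>S. y i powr s) \<le> real (card S) powr (1-s) * (\<Sum>i\<in>S. y i) powr s"
proof (cases "(\<Sum>i\<in>S. y i) = 0")
  case True
  then have "\<forall>i\<in>S. y i = 0" using S y by (subst (asm) sum_nonneg_eq_0_iff) auto
  then show ?thesis by simp
next
  case False
  define T where "T = (\<Sum>i\<in>S. y i)"
  have Tp: "T > 0" using False y by (simp add: T_def sum_nonneg order_less_le)
  have Sne: "S \<noteq> {}" using False by auto
  define n where "n = real (card S)"
  have np: "n > 0" using S Sne by (simp add: n_def card_gt_0_iff)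
  define c where "c = T / n"
  have cp: "c > 0" using Tp np by (simp add: c_def)
  have pt: "y i powr s * c powr (1-s) \<le> s * y i + (1-s) * c" if i: "i \<in> S" for i
  proof (cases "y i = 0")
    case True then show ?thesis using s cp by simp
  next
    case False then show ?thesis using Youngs_inequality_0[of s "1-s" "y i" c] s cp y[OF i] by simp
  qed
  have "(\<Sum>i\<in>S. y i powr s) * c powr (1-s) = (\<Sum>i\<in>S. y i powr s * c powr (1-s))"
    by (simp add: sum_distrib_right)
  also have "\<dots> \<le> (\<Sum>i\<in>S. s * y i + (1-s) * c)" by (rule sum_mono) (use pt in auto)
  also have "\<dots> = s * T + (1-s) * c * n" by (simp add: sum.distrib sum_distrib_left T_def n_def)
  also have "\<dots> = T" using np by (simp add: c_def field_simps)
  finally have "(\<Sum>i\<in>S. y i powr s) \<le> T / c powr (1-s)" using cp by (simp add: field_simps)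
  also have "T / c powr (1-s) = n powr (1-s) * T powr s"
    using Tp np by (simp add: c_def powr_divide powr_diff field_simps)
  finally show ?thesis by (simp add: n_def T_def)
qed

lemma L4:
  fixes a :: "'i \<Rightarrow> 'j \<Rightarrow> complex" and J :: "('i \<times> 'j) set" and p :: real
  assumes J: "finite J" and p: "1 \<le> p" "p \<le> 2"
    and sr: "\<forall>j. (\<lambda>i. (cmod (a i j))\<^sup>2) summable_on UNIV"
    and sc: "(\<lambda>j. (\<Sum>\<^sub>\<infinity>i. (cmod (a i j))\<^sup>2) powr (p/2)) summable_on UNIV"
  shows "(\<Sum>(i,j)\<in>J. (real (card {i. (i,j)\<in>J}) powr (1/2-1/p) * cmod (a i j)) powr p)
     \<le> (\<Sum>\<^sub>\<infinity>j. (\<Sum>\<^sub>\<infinity>i. (cmod (a i j))\<^sup>2) powr (p/2))"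
proof -
  define K where "K j = {i. (i,j)\<in>J}" for j
  define f where "f i j = (real (card (K j)) powr (1/2-1/p) * cmod (a i j)) powr p" for i j
  have fK: "finite (K j)" for j
    by (rule finite_subset[of _ "fst ` J"]) (use J in \<open>force simp: K_def\<close>)+
  have JS: "J = (\<lambda>(j,i). (i,j)) ` (SIGMA j:snd`J. K j)" by (force simp: K_def)
  have inj: "inj_on (\<lambda>(j,i). (i,j)) (SIGMA j:snd`J. K j)" by (auto simp: inj_on_def)
  have "(\<Sum>(i,j)\<in>J. (real (card {i. (i,j)\<in>J}) powr (1/2-1/p) * cmod (a i j)) powr p)
      = (\<Sum>(i,j)\<in>J. f i j)" by (simp add: f_def K_def)
  also have "\<dots> = (\<Sum>(j,i)\<in>(SIGMA j:snd`J. K j). f i j)"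
    by (subst JS, subst sum.reindex[OF inj]) (simp add: case_prod_unfold)
  also have "\<dots> = (\<Sum>j\<in>snd`J. \<Sum>i\<in>K j. f i j)"
    by (rule sum.Sigma[symmetric]) (use J fK in auto)
  also have "\<dots> \<le> (\<Sum>j\<in>snd`J. (\<Sum>\<^sub>\<infinity>i. (cmod (a i j))\<^sup>2) powr (p/2))"
  proof (rule sum_mono)
    fix j assume j: "j \<in> snd ` J"
    define d where "d = real (card (K j))"
    have "K j \<noteq> {}" using j by (force simp: K_def)
    then have d1: "d \<ge> 1" using fK[of j] by (simp add: d_def Suc_le_eq card_gt_0_iff)
    have fe: "f i j = d powr (p/2 - 1) * ((cmod (a i j))\<^sup>2) powr (p/2)" for i
    proof -
      have "f i j = (d powr (1/2-1/p)) powr p * cmod (a i j) powr p"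
        by (simp add: f_def d_def powr_mult)
      also have "(d powr (1/2-1/p)) powr p = d powr (p/2 - 1)"
      proof -
        have "(1/2-1/p) * p = p/2 - 1" using p by (simp add: field_simps)
        then show ?thesis unfolding powr_powr by (rule arg_cong[of _ _ "\<lambda>e. d powr e"])
      qed
      also have "cmod (a i j) powr p = ((cmod (a i j))\<^sup>2) powr (p/2)"
      proof -
        have "(cmod (a i j))\<^sup>2 = cmod (a i j) powr 2"
          by (cases "a i j = 0") (simp_all add: powr_numeral)
        then show ?thesis using powr_powr[of "cmod (a i j)" 2 "p/2"] by simp
      qed
      finally show ?thesis .
    qed
    have "(\<Sum>i\<in>K j. f i j) = d powr (p/2 - 1) * (\<Sum>i\<in>K j. ((cmod (a i j))\<^sup>2) powr (p/2))"
      by (simp add: fe sum_distrib_left)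
    also have "\<dots> \<le> d powr (p/2 - 1) * (d powr (1 - p/2) * (\<Sum>i\<in>K j. (cmod (a i j))\<^sup>2) powr (p/2))"
      by (rule mult_left_mono, unfold d_def, rule L3) (use fK p in auto)
    also have "\<dots> = (\<Sum>i\<in>K j. (cmod (a i j))\<^sup>2) powr (p/2)"
    proof -
      have "d powr (p/2 - 1) * d powr (1 - p/2) = 1" using d1 by (simp flip: powr_add)
      then show ?thesis by (simp add: mult.assoc[symmetric])
    qed
    also have "\<dots> \<le> (\<Sum>\<^sub>\<infinity>i. (cmod (a i j))\<^sup>2) powr (p/2)"
      by (rule powr_mono2) (use p sr fK in \<open>auto intro!: sum_nonneg finite_sum_le_infsum\<close>)
    finally show "(\<Sum>i\<in>K j. f i j) \<le> (\<Sum>\<^sub>\<infinity>i. (cmod (a i j))\<^sup>2) powr (p/2)" .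
  qed
  also have "\<dots> \<le> (\<Sum>\<^sub>\<infinity>j. (\<Sum>\<^sub>\<infinity>i. (cmod (a i j))\<^sup>2) powr (p/2))"
    by (rule finite_sum_le_infsum) (use sc J in auto)
  finally show ?thesis .
qed

lemma fin_summ:
  fixes f :: "'a \<Rightarrow> real"
  assumes "finite F" "\<And>i. i \<notin> F \<Longrightarrow> f i = 0"
  shows "f summable_on UNIV"
proof -
  have "f summable_on F" using assms by simp
  then show ?thesis by (subst summable_on_cong_neutral[of UNIV F f f, symmetric]) (use assms in auto)
qed

theorem lemma4p1:
  fixes p :: real and R' :: "'r set" and C' :: "'c set"
    and I :: "('r \<times> 'c) set" and xq :: "'r \<times> 'c \<Rightarrow> complex"
  assumes "1 \<le> p" "p \<le> 2" "finite R'" "finite C'"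
  defines "I' \<equiv> I \<inter> (R' \<times> C')"
  defines "x \<equiv> (\<lambda>r c. if (r, c) \<in> I' then xq (r, c) else 0)"
  defines "dc \<equiv> (\<lambda>c. card (I' \<inter> (R' \<times> {c})))"
  defines "dr \<equiv> (\<lambda>r. card (I' \<inter> ({r} \<times> C')))"
  shows "triple_norm p x powr p \<ge>
    (\<Sum>(r, c)\<in>I'. (real (max (dc c) (dr r)) powr (1/2 - 1/p) * cmod (xq (r, c))) powr p)"
proof -
  note p = assms(1,2)
  define e where "e = 1/2 - 1/p"
  have e0: "e \<le> 0" using p by (simp add: e_def field_simps)
  define w where "w r c = real (max (dc c) (dr r)) powr e" for r c
  define S where "S = (\<Sum>(r, c)\<in>I'. (w r c * cmod (xq (r, c))) powr p)"
  have fI: "finite I'" unfolding I'_def using assms(3,4) by (auto intro: finite_subset)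
  have S0: "S \<ge> 0" unfolding S_def by (auto intro!: sum_nonneg)
  have dc_eq: "dc c = card {r. (r,c) \<in> I'}" for c
  proof -
    have "I' \<inter> (R' \<times> {c}) = (\<lambda>r. (r,c)) ` {r. (r,c) \<in> I'}" by (auto simp: I'_def)
    then show ?thesis unfolding dc_def by (simp add: card_image inj_on_def)
  qed
  have dr_eq: "dr r = card {c. (c,r) \<in> prod.swap ` I'}" for r
  proof -
    have "I' \<inter> ({r} \<times> C') = (\<lambda>c. (r,c)) ` {c. (c,r) \<in> prod.swap ` I'}" by (auto simp: I'_def)
    then show ?thesis unfolding dr_def by (simp add: card_image inj_on_def)
  qed
  have wc: "w r c \<le> real (card {r. (r,c) \<in> I'}) powr e" if "(r,c) \<in> I'" for r c
  proof -
    have "{r. (r,c) \<in> I'} \<noteq> {}" using that by auto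
    moreover have "finite {r. (r,c) \<in> I'}" by (rule finite_subset[of _ R']) (use assms(3) in \<open>auto simp: I'_def\<close>)
    ultimately have "card {r. (r,c) \<in> I'} > 0" by (simp add: card_gt_0_iff)
    then show ?thesis unfolding w_def by (intro powr_mono2'[OF e0]) (auto simp: dc_eq)
  qed
  have wr: "w r c \<le> real (card {c. (c,r) \<in> prod.swap ` I'}) powr e" if "(r,c) \<in> I'" for r c
  proof -
    have "{c. (c,r) \<in> prod.swap ` I'} \<noteq> {}" using that by force
    moreover have "finite {c. (c,r) \<in> prod.swap ` I'}" by (rule finite_subset[of _ C']) (use assms(4) in \<open>auto simp: I'_def\<close>)
    ultimately have "card {c. (c,r) \<in> prod.swap ` I'} > 0" by (simp add: card_gt_0_iff)
    then show ?thesis unfolding w_def by (intro powr_mono2'[OF e0]) (auto simp: dr_eq)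
  qed
  have key: "S \<le> (col_norm p a + row_norm p b) powr p"
    if ab: "\<forall>r c. a r c + b r c = x r c" and ca: "col_fin p a" and rb: "row_fin p b" for a b
  proof -
    define A where "A = col_norm p a"
    define B where "B = row_norm p b"
    define u where "u q = w (fst q) (snd q) * cmod (a (fst q) (snd q))" for q
    define v where "v q = w (fst q) (snd q) * cmod (b (fst q) (snd q))" for q
    have A0: "A \<ge> 0" and B0: "B \<ge> 0" by (auto simp: A_def B_def col_norm_def row_norm_def)
    have "S \<le> (\<Sum>q\<in>I'. (u q + v q) powr p)"
      unfolding S_def
    proof (rule sum_mono, clarify)
      fix r c assume rc: "(r,c) \<in> I'"
      have "xq (r,c) = a r c + b r c" using ab rc by (simp add: x_def)
      then have "cmod (xq (r,c)) \<le> cmod (a r c) + cmod (b r c)" by (simp add: norm_triangle_ineq)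
      then have "w r c * cmod (xq (r,c)) \<le> u (r,c) + v (r,c)"
        unfolding u_def v_def by (simp add: w_def distrib_left[symmetric] mult_left_mono)
      then show "(w r c * cmod (xq (r,c))) powr p \<le> (u (r,c) + v (r,c)) powr p"
        using p by (intro powr_mono2) (auto simp: w_def)
    qed
    also have "\<dots> \<le> (A + B) powr p"
    proof (rule L2[OF fI p(1) _ _ A0 B0])
      have "(\<Sum>q\<in>I'. u q powr p) \<le> (\<Sum>(r,c)\<in>I'. (real (card {r'. (r',c)\<in>I'}) powr (1/2-1/p) * cmod (a r c)) powr p)"
      proof (rule sum_mono, clarify)
        fix r c assume rc: "(r,c) \<in> I'"
        show "u (r,c) powr p \<le> (real (card {r'. (r',c)\<in>I'}) powr (1/2-1/p) * cmod (a r c)) powr p"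
          unfolding u_def using p wc[OF rc] by (intro powr_mono2) (auto simp: w_def e_def intro!: mult_right_mono)
      qed
      also have "\<dots> \<le> (\<Sum>\<^sub>\<infinity>c. (\<Sum>\<^sub>\<infinity>r. (cmod (a r c))\<^sup>2) powr (p/2))"
        by (rule L4[OF fI p]) (use ca in \<open>auto simp: col_fin_def\<close>)
      also have "\<dots> = A powr p"
      proof -
        have "(\<Sum>\<^sub>\<infinity>c. (\<Sum>\<^sub>\<infinity>r. (cmod (a r c))\<^sup>2) powr (p/2)) \<ge> 0" by (auto intro!: infsum_nonneg)
        then show ?thesis using p by (simp add: A_def col_norm_def powr_powr)
      qed
      finally show "(\<Sum>q\<in>I'. u q powr p) \<le> A powr p" .
    next
      have "(\<Sum>q\<in>I'. v q powr p) \<le> (\<Sum>(r,c)\<in>I'. (real (card {c'. (c',r)\<in>prod.swap ` I'}) powr (1/2-1/p) * cmod (b r c)) powr p)"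
      proof (rule sum_mono, clarify)
        fix r c assume rc: "(r,c) \<in> I'"
        show "v (r,c) powr p \<le> (real (card {c'. (c',r)\<in>prod.swap ` I'}) powr (1/2-1/p) * cmod (b r c)) powr p"
          unfolding v_def using p wr[OF rc] by (intro powr_mono2) (auto simp: w_def e_def intro!: mult_right_mono)
      qed
      also have "\<dots> = (\<Sum>(c,r)\<in>prod.swap ` I'. (real (card {c'. (c',r)\<in>prod.swap ` I'}) powr (1/2-1/p) * cmod (b r c)) powr p)"
        by (subst sum.reindex) (auto simp: case_prod_unfold)
      also have "\<dots> \<le> (\<Sum>\<^sub>\<infinity>r. (\<Sum>\<^sub>\<infinity>c. (cmod (b r c))\<^sup>2) powr (p/2))"
        by (rule L4[OF _ p, of "prod.swap ` I'" "\<lambda>c r. b r c"]) (use rb fI in \<open>auto simp: row_fin_def\<close>)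
      also have "\<dots> = B powr p"
      proof -
        have "(\<Sum>\<^sub>\<infinity>r. (\<Sum>\<^sub>\<infinity>c. (cmod (b r c))\<^sup>2) powr (p/2)) \<ge> 0" by (auto intro!: infsum_nonneg)
        then show ?thesis using p by (simp add: B_def row_norm_def powr_powr)
      qed
      finally show "(\<Sum>q\<in>I'. v q powr p) \<le> B powr p" .
    qed (auto simp: u_def v_def w_def)
    finally show ?thesis by (simp add: A_def B_def)
  qed
  define X where "X = {col_norm p a + row_norm p b | a b.
      (\<forall>r c. a r c + b r c = x r c) \<and> col_fin p a \<and> row_fin p (b :: 'r \<Rightarrow> 'c \<Rightarrow> complex)}"
  have cx: "col_fin p x"
    unfolding col_fin_def
  proof
    show "\<forall>c. (\<lambda>r. (cmod (x r c))\<^sup>2) summable_on UNIV"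
      by (intro allI fin_summ[OF assms(3)]) (auto simp: x_def I'_def)
    show "(\<lambda>c. (\<Sum>\<^sub>\<infinity>r. (cmod (x r c))\<^sup>2) powr (p/2)) summable_on UNIV"
      by (intro fin_summ[OF assms(4)]) (auto simp: x_def I'_def)
  qed
  define z :: "'r \<Rightarrow> 'c \<Rightarrow> complex" where "z = (\<lambda>_ _. 0)"
  have r0: "row_fin p z" by (simp add: row_fin_def z_def)
  have s0: "\<forall>r c. x r c + z r c = x r c" by (simp add: z_def)
  have "col_norm p x + row_norm p z \<in> X" unfolding X_def using cx r0 s0
    by blast
  then have Xne: "X \<noteq> {}" by auto
  have "S powr (1/p) \<le> Inf X"
  proof (rule cInf_greatest[OF Xne])
    fix N assume "N \<in> X"
    then obtain a b where N: "N = col_norm p a + row_norm p b" and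
      ab: "\<forall>r c. a r c + b r c = x r c" "col_fin p a" "row_fin p b" unfolding X_def by blast
    have N0: "N \<ge> 0" by (auto simp: N col_norm_def row_norm_def)
    have "S powr (1/p) \<le> (N powr p) powr (1/p)"
      using key[OF ab] S0 p N by (intro powr_mono2) auto
    also have "\<dots> = N" using N0 p by (simp add: powr_powr)
    finally show "S powr (1/p) \<le> N" .
  qed
  then have T: "S powr (1/p) \<le> triple_norm p x" by (simp add: triple_norm_def X_def)
  have "S = (S powr (1/p)) powr p" using S0 p by (simp add: powr_powr)
  also have "\<dots> \<le> triple_norm p x powr p" using T p by (intro powr_mono2) auto
  finally show ?thesis by (simp add: S_def w_def e_def)
qed

end
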